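(* Let $\hat{\mathfrak{so}}$ be the extended Schr\"odinger-Virasoro algebra over $\mathbb{C}$ and, for $g\in\frac12\mathbb{Z}$, let $\Delta_g(\hat{\mathfrak{so}})$ be the space of $\frac12$-derivations of $\hat{\mathfrak{so}}$ of degree $g$. Then $\Delta_0(\hat{\mathfrak{so}})=\langle \mathrm{Id}\rangle$ (the scalar multiples of the identity map) and $\Delta_j(\hat{\mathfrak{so}})=0$ for every $j\in\mathbb{Z}\setminus\{0\}$.
   Context: The extended Schr\"odinger-Virasoro algebra $\hat{\mathfrak{so}}$ is the complex Lie algebra with basis $\{L_n,M_n,N_n,Y_{n+\frac12},C_L,C_{LN},C_N\mid n\in\mathbb{Z}\}$ and brackets (all others zero, $C_L,C_{LN},C_N$ central): $[L_m,L_n]=(n-m)L_{m+n}+\delta_{m+n,0}\frac{m^3-m}{12}C_L$, $[L_m,M_n]=nM_{m+n}$, $[L_m,N_n]=nN_{m+n}+\delta_{m+n,0}(m^2-m)C_{LN}$, $[N_m,M_n]=2M_{m+n}$, $[L_m,Y_{n+\frac12}]=(n+\frac{1-m}{2})Y_{m+n+\frac12}$, $[N_m,Y_{n+\frac12}]=Y_{m+n+\frac12}$, $[Y_{m+\frac12},Y_{n+\frac12}]=(m-n)M_{m+n+1}$, $[N_m,N_n]=n\delta_{m+n,0}C_N$, for all $m,n\in\mathbb{Z}$. It is $\frac12\mathbb{Z}$-graded by $\hat{\mathfrak{so}}_0=\langle L_0,M_0,N_0,C_L,C_{LN},C_N\rangle$, $\hat{\mathfrak{so}}_n=\langle L_n,M_n,N_n\rangle$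 for $n\in\mathbb{Z}\setminus\{0\}$, $\hat{\mathfrak{so}}_{n+\frac12}=\langle Y_{n+\frac12}\rangle$. A $\frac12$-derivation of a Lie algebra $L$ is a linear map $\varphi:L\to L$ with $\varphi([x,y])=\frac12([\varphi(x),y]+[x,\varphi(y)])$ for all $x,y$. A $\frac12$-derivation $\varphi$ has degree $g$ if $\varphi(\hat{\mathfrak{so}}_h)\subseteq\hat{\mathfrak{so}}_{g+h}$ for all $h\in\frac12\mathbb{Z}$. *)

theory Defs
  imports Complex_Main
begin

text \<open>Basis of the extended Schroedinger-Virasoro algebra.
  SL n = L_n, SM n = M_n, SN n = N_n, SY n = Y_{n+1/2}, and the central elements.\<close>
datatype sob = SL int | SM int | SN int | SY int | CL | CLN | CN

definition sv :: "sob \<Rightarrow> complex \<Rightarrow> sob \<Rightarrow> complex" where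
  "sv b c = (\<lambda>z. if z = b then c else 0)"

fun br :: "sob \<Rightarrow> sob \<Rightarrow> sob \<Rightarrow> complex" where
  "br (SL m) (SL n) = (\<lambda>z. (if z = SL (m+n) then of_int (n-m) else 0)
      + (if z = CL \<and> m + n = 0 then (of_int m ^ 3 - of_int m) / 12 else 0))"
| "br (SL m) (SM n) = sv (SM (m+n)) (of_int n)"
| "br (SM n) (SL m) = sv (SM (m+n)) (- of_int n)"
| "br (SL m) (SN n) = (\<lambda>z. (if z = SN (m+n) then of_int n else 0)
      + (if z = CLN \<and> m + n = 0 then of_int m ^ 2 - of_int m else 0))"
| "br (SN n) (SL m) = (\<lambda>z. - ((if z = SN (m+n) then of_int n else 0)
      + (if z = CLN \<and> m + n = 0 then of_int m ^ 2 - of_int m else 0)))"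
| "br (SN m) (SM n) = sv (SM (m+n)) 2"
| "br (SM n) (SN m) = sv (SM (m+n)) (-2)"
| "br (SL m) (SY n) = sv (SY (m+n)) (of_int n + (1 - of_int m) / 2)"
| "br (SY n) (SL m) = sv (SY (m+n)) (- (of_int n + (1 - of_int m) / 2))"
| "br (SN m) (SY n) = sv (SY (m+n)) 1"
| "br (SY n) (SN m) = sv (SY (m+n)) (-1)"
| "br (SY m) (SY n) = sv (SM (m+n+1)) (of_int (m-n))"
| "br (SN m) (SN n) = sv CN (if m + n = 0 then of_int n else 0)"
| "br _ _ = (\<lambda>z. 0)"

definition soV :: "(sob \<Rightarrow> complex) set" where
  "soV = {x. finite {b. x b \<noteq> 0}}"

definition lie :: "(sob \<Rightarrow> complex) \<Rightarrow> (sob \<Rightarrow> complex) \<Rightarrow> sob \<Rightarrow> complex" where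
  "lie x y = (\<lambda>z. \<Sum>a\<in>{a. x a \<noteq> 0}. \<Sum>b\<in>{b. y b \<noteq> 0}. x a * y b * br a b z)"

fun deg :: "sob \<Rightarrow> real" where
  "deg (SL n) = of_int n"
| "deg (SM n) = of_int n"
| "deg (SN n) = of_int n"
| "deg (SY n) = of_int n + 1/2"
| "deg CL = 0"
| "deg CLN = 0"
| "deg CN = 0"

definition piece :: "real \<Rightarrow> (sob \<Rightarrow> complex) set" where
  "piece h = {x \<in> soV. \<forall>b. x b \<noteq> 0 \<longrightarrow> deg b = h}"

definition linear_map_so :: "((sob \<Rightarrow> complex) \<Rightarrow> (sob \<Rightarrow> complex)) \<Rightarrow> bool" where
  "linear_map_so \<phi> \<longleftrightarrow> (\<forall>x\<in>soV. \<phi> x \<in> soV)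
     \<and> (\<forall>x\<in>soV. \<forall>y\<in>soV. \<phi> (\<lambda>z. x z + y z) = (\<lambda>z. \<phi> x z + \<phi> y z))
     \<and> (\<forall>c. \<forall>x\<in>soV. \<phi> (\<lambda>z. c * x z) = (\<lambda>z. c * \<phi> x z))"

definition half_derivation :: "((sob \<Rightarrow> complex) \<Rightarrow> (sob \<Rightarrow> complex)) \<Rightarrow> bool" where
  "half_derivation \<phi> \<longleftrightarrow> linear_map_so \<phi> \<and>
     (\<forall>x\<in>soV. \<forall>y\<in>soV. \<phi> (lie x y) = (\<lambda>z. (lie (\<phi> x) y z + lie x (\<phi> y) z) / 2))"

definition has_degree :: "((sob \<Rightarrow> complex) \<Rightarrow> (sob \<Rightarrow> complex)) \<Rightarrow> real \<Rightarrow> bool" where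
  "has_degree \<phi> g \<longleftrightarrow> (\<forall>h. 2 * h \<in> \<int> \<longrightarrow> \<phi> ` piece h \<subseteq> piece (g + h))"

definition Delta :: "real \<Rightarrow> ((sob \<Rightarrow> complex) \<Rightarrow> (sob \<Rightarrow> complex)) set" where
  "Delta g = {\<phi>. half_derivation \<phi> \<and> has_degree \<phi> g}"

end

theory Submission
  imports Defs
begin


definition eb :: "sob \<Rightarrow> sob \<Rightarrow> complex" where
  "eb b = (\<lambda>z. if z = b then 1 else 0)"

lemma supp_eb: "{w. eb b w \<noteq> 0} = {b}"
  by (auto simp: eb_def)

lemma eb_soV: "eb b \<in> soV"
  by (simp add: soV_def supp_eb)

lemma eb_piece: "eb b \<in> piece (deg b)"
  unfolding piece_def using eb_soV by (auto simp: eb_def)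

lemma sum_eb: assumes "finite S" "{w. v w \<noteq> 0} \<subseteq> S"
  shows "(\<Sum>w\<in>S. v w * eb w z) = v z"
proof -
  have "(\<Sum>w\<in>S. v w * eb w z) = (\<Sum>w\<in>S. if w = z then v z else 0)"
    by (rule sum.cong) (auto simp: eb_def)
  also have "\<dots> = (if z \<in> S then v z else 0)"
    using assms(1) by (simp add: sum.delta')
  also have "\<dots> = v z" using assms(2) by auto
  finally show ?thesis .
qed

lemma lie_right:
  assumes "finite W" "{w. v w \<noteq> 0} \<subseteq> W"
  shows "lie v (eb b) z = (\<Sum>w\<in>W. v w * br w b z)"
proof -
  have "lie v (eb b) z = (\<Sum>a\<in>{a. v a \<noteq> 0}. v a * br a b z)"
    unfolding lie_def supp_eb by (simp add: eb_def)
  also have "\<dots> = (\<Sum>w\<in>W. v w * br w b z)"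
    by (rule sum.mono_neutral_left) (use assms in auto)
  finally show ?thesis .
qed

lemma lie_left:
  assumes "finite W" "{w. v w \<noteq> 0} \<subseteq> W"
  shows "lie (eb a) v z = (\<Sum>w\<in>W. v w * br a w z)"
proof -
  have "lie (eb a) v z = (\<Sum>b\<in>{b. v b \<noteq> 0}. v b * br a b z)"
    unfolding lie_def supp_eb by (simp add: eb_def)
  also have "\<dots> = (\<Sum>w\<in>W. v w * br a w z)"
    by (rule sum.mono_neutral_left) (use assms in auto)
  finally show ?thesis .
qed

lemma lie_eb_eb: "lie (eb a) (eb b) = br a b"
proof
  fix z show "lie (eb a) (eb b) z = br a b z"
    using lie_right[of "{a}" "eb a" b z] by (simp add: supp_eb eb_def)
qed

lemma lie_zero_left: "lie (\<lambda>z. 0) y = (\<lambda>z. 0)"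
  by (simp add: lie_def)

lemma lie_zero_right: "lie x (\<lambda>z. 0) = (\<lambda>z. 0)"
  by (simp add: lie_def)

lemma br_SL0: "br (SL 0) w = (\<lambda>z. complex_of_real (deg w) * eb w z)"
  by (cases w) (auto simp: eb_def sv_def fun_eq_iff)

lemma br_CL: "br CL w = (\<lambda>z. 0)" by (cases w) auto
lemma br_CLN: "br CLN w = (\<lambda>z. 0)" by (cases w) auto
lemma br_CN: "br CN w = (\<lambda>z. 0)" by (cases w) auto

lemma deg_int: assumes "deg w = real_of_int k"
  shows "w \<in> {SL k, SM k, SN k, CL, CLN, CN} \<and> (k \<noteq> 0 \<longrightarrow> w \<in> {SL k, SM k, SN k})"
proof (cases w)
  case (SY n)
  then have "real_of_int (2*n+1) = real_of_int (2*k)" using assms by simp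
  then have "2*n+1 = 2*k" by linarith
  then show ?thesis by presburger
qed (use assms in auto)

lemma half_ne0: "real_of_int k + 1/2 \<noteq> 0"
proof
  assume "real_of_int k + 1/2 = 0"
  then have "real_of_int (2*k+1) = real_of_int 0" by simp
  then have "2*k+1 = 0" by linarith
  then show False by presburger
qed

lemma deg_half: assumes "deg w = real_of_int k + 1/2" shows "w = SY k"
proof (cases w)
  case (SY n) then show ?thesis using assms by simp
next
  case (SL n)
  then have "real_of_int (2*n) = real_of_int (2*k+1)" using assms by simp
  then have "2*n = 2*k+1" by linarith
  then have False by presburger
  then show ?thesis ..
next
  case (SM n)
  then have "real_of_int (2*n) = real_of_int (2*k+1)" using assms by simp
  then have "2*n = 2*k+1" by linarith
  then have False by presburger
  then show ?thesis ..
next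
  case (SN n)
  then have "real_of_int (2*n) = real_of_int (2*k+1)" using assms by simp
  then have "2*n = 2*k+1" by linarith
  then have False by presburger
  then show ?thesis ..
qed (use assms half_ne0[of k] in \<open>auto\<close>)

lemma deg_twice: "2 * deg w \<in> \<int>"
  by (cases w) auto

lemma supp_piece: "v \<in> piece h \<Longrightarrow> {w. v w \<noteq> 0} \<subseteq> {w. deg w = h}"
  by (auto simp: piece_def)

lemma fin_piece: "v \<in> piece h \<Longrightarrow> finite {w. v w \<noteq> 0}"
  by (auto simp: piece_def soV_def)

lemma supp3: assumes "v \<in> piece h" "h = real_of_int k" "k \<noteq> 0"
  shows "{w. v w \<noteq> 0} \<subseteq> {SL k, SM k, SN k}"
  using supp_piece[OF assms(1)] deg_int assms(2,3) by blast

lemma supp6: assumes "v \<in> piece h" "h = 0"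
  shows "{w. v w \<noteq> 0} \<subseteq> {SL 0, SM 0, SN 0, CL, CLN, CN}"
  using supp_piece[OF assms(1)] deg_int[of _ 0] assms(2) by auto

lemma supp1: assumes "v \<in> piece h" "h = real_of_int k + 1/2"
  shows "{w. v w \<noteq> 0} \<subseteq> {SY k}"
  using supp_piece[OF assms(1)] deg_half assms(2) by blast

lemma lie_right3: assumes "{w. v w \<noteq> 0} \<subseteq> {SL k, SM k, SN k}"
  shows "lie v (eb b) z = v (SL k) * br (SL k) b z + v (SM k) * br (SM k) b z + v (SN k) * br (SN k) b z"
  using lie_right[OF _ assms, of b z] by simp

lemma lie_left3: assumes "{w. v w \<noteq> 0} \<subseteq> {SL k, SM k, SN k}"
  shows "lie (eb a) v z = v (SL k) * br a (SL k) z + v (SM k) * br a (SM k) z + v (SN k) * br a (SN k) z"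
  using lie_left[OF _ assms, of a z] by simp

lemma lie_right1: assumes "{w. v w \<noteq> 0} \<subseteq> {SY k}"
  shows "lie v (eb b) z = v (SY k) * br (SY k) b z"
  using lie_right[OF _ assms, of b z] by simp

lemma lie_left1: assumes "{w. v w \<noteq> 0} \<subseteq> {SY k}"
  shows "lie (eb a) v z = v (SY k) * br a (SY k) z"
  using lie_left[OF _ assms, of a z] by simp

lemma lie_right6: assumes "{w. v w \<noteq> 0} \<subseteq> {SL 0, SM 0, SN 0, CL, CLN, CN}"
  shows "lie v (eb b) z = v (SL 0) * br (SL 0) b z + v (SM 0) * br (SM 0) b z + v (SN 0) * br (SN 0) b z"
  using lie_right[OF _ assms, of b z] by (simp add: br_CL br_CLN br_CN)

lemma lie_SL0: assumes "v \<in> piece h"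
  shows "lie (eb (SL 0)) v z = complex_of_real h * v z"
proof -
  have f: "finite {w. v w \<noteq> 0}" using fin_piece[OF assms] .
  have "lie (eb (SL 0)) v z = (\<Sum>w\<in>{w. v w \<noteq> 0}. v w * br (SL 0) w z)"
    by (rule lie_left[OF f]) simp
  also have "\<dots> = (\<Sum>w\<in>{w. v w \<noteq> 0}. complex_of_real h * (v w * eb w z))"
    by (rule sum.cong) (use supp_piece[OF assms] in \<open>auto simp: br_SL0\<close>)
  also have "\<dots> = complex_of_real h * v z"
    by (simp add: sum_distrib_left[symmetric] sum_eb[OF f])
  finally show ?thesis .
qed



lemma final_lemma:
  assumes lin: "linear_map_so \<phi>" and base: "\<And>b. \<phi> (eb b) = (\<lambda>z. c * eb b z)"
  shows "x \<in> soV \<Longrightarrow> \<phi> x = (\<lambda>z. c * x z)"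
proof -
  have scV: "\<And>x d. x \<in> soV \<Longrightarrow> (\<lambda>z. d * x z) \<in> soV"
    unfolding soV_def by (auto elim: finite_subset[rotated])
  have add: "\<And>x y. x \<in> soV \<Longrightarrow> y \<in> soV \<Longrightarrow> \<phi> (\<lambda>z. x z + y z) = (\<lambda>z. \<phi> x z + \<phi> y z)"
   and sc: "\<And>d x. x \<in> soV \<Longrightarrow> \<phi> (\<lambda>z. d * x z) = (\<lambda>z. d * \<phi> x z)"
    using lin unfolding linear_map_so_def by auto
  have z: "\<phi> (\<lambda>z. 0) = (\<lambda>z. 0)"
    using sc[of "eb CL" 0] eb_soV by simp
  have "\<forall>x::sob\<Rightarrow>complex. {w. x w \<noteq> 0} \<subseteq> S \<longrightarrow> \<phi> x = (\<lambda>z. c * x z)" if "finite S" for S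
    using that
  proof (induction S rule: finite_induct)
    case empty
    then show ?case using z by auto
  next
    case (insert b S)
    show ?case
    proof (intro allI impI)
      fix x :: "sob \<Rightarrow> complex" assume xs: "{w. x w \<noteq> 0} \<subseteq> insert b S"
      define x' where "x' = x(b := 0)"
      have x's: "{w. x' w \<noteq> 0} \<subseteq> S" using xs by (auto simp: x'_def)
      have x'V: "x' \<in> soV" unfolding soV_def using x's insert(1) finite_subset by auto
      have ex: "x = (\<lambda>z. x' z + x b * eb b z)"
        by (auto simp: x'_def eb_def fun_eq_iff)
      have e1: "\<phi> x = (\<lambda>z. \<phi> x' z + \<phi> (\<lambda>z. x b * eb b z) z)"
        apply (subst ex)
        apply (rule add[OF x'V])
        using scV eb_soV by blast
      have e2: "\<phi> x' = (\<lambda>z. c * x' z)" using insert.IH x's by blast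
      have e3: "\<phi> (\<lambda>z. x b * eb b z) = (\<lambda>z. x b * (c * eb b z))"
        using sc[OF eb_soV, of "x b" b] base[of b] by simp
      have "\<phi> x = (\<lambda>z. c * x' z + x b * (c * eb b z))" using e1 e2 e3 by simp
      also have "\<dots> = (\<lambda>z. c * (x' z + x b * eb b z))" by (simp add: algebra_simps)
      also have "\<dots> = (\<lambda>z. c * x z)" by (subst ex) simp
      finally show "\<phi> x = (\<lambda>z. c * x z)" .
    qed
  qed
  then show "x \<in> soV \<Longrightarrow> \<phi> x = (\<lambda>z. c * x z)"
    unfolding soV_def by auto
qed

locale HDer =
  fixes \<phi> :: "(sob \<Rightarrow> complex) \<Rightarrow> sob \<Rightarrow> complex" and g :: real
  assumes hd: "half_derivation \<phi>" and dg: "has_degree \<phi> g"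
begin

lemma lin: "linear_map_so \<phi>" using hd by (simp add: half_derivation_def)

lemma sc: "x \<in> soV \<Longrightarrow> \<phi> (\<lambda>z. d * x z) = (\<lambda>z. d * \<phi> x z)"
  using lin unfolding linear_map_so_def by auto

lemma add: "x \<in> soV \<Longrightarrow> y \<in> soV \<Longrightarrow> \<phi> (\<lambda>z. x z + y z) = (\<lambda>z. \<phi> x z + \<phi> y z)"
  using lin unfolding linear_map_so_def by auto

lemma phi_zero: "\<phi> (\<lambda>z. 0) = (\<lambda>z. 0)"
  using sc[of "eb CL" 0] eb_soV by simp

lemma phi_sc: "\<phi> (\<lambda>z. d * eb b z) = (\<lambda>z. d * \<phi> (eb b) z)"
  using sc[OF eb_soV] .

lemma scV: "x \<in> soV \<Longrightarrow> (\<lambda>z. d * x z) \<in> soV"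
  unfolding soV_def by (auto elim: finite_subset[rotated])

lemma phi_comb: "\<phi> (\<lambda>z. d1 * eb p z + d2 * eb q z) = (\<lambda>z. d1 * \<phi> (eb p) z + d2 * \<phi> (eb q) z)"
  using add[OF scV[OF eb_soV] scV[OF eb_soV], of d1 p d2 q] phi_sc by simp

lemma HDeq: "\<phi> (br a b) z = (lie (\<phi> (eb a)) (eb b) z + lie (eb a) (\<phi> (eb b)) z) / 2"
proof -
  have "\<phi> (lie (eb a) (eb b)) = (\<lambda>z. (lie (\<phi> (eb a)) (eb b) z + lie (eb a) (\<phi> (eb b)) z) / 2)"
    using hd eb_soV unfolding half_derivation_def by blast
  then show ?thesis unfolding lie_eb_eb by simp
qed

lemma upiece: "\<phi> (eb b) \<in> piece (g + deg b)"
  using dg eb_piece deg_twice unfolding has_degree_def by blast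

lemma K: "complex_of_real (deg x - g) * \<phi> (eb x) z = lie (\<phi> (eb (SL 0))) (eb x) z"
proof -
  have "\<phi> (br (SL 0) x) = (\<lambda>z. complex_of_real (deg x) * \<phi> (eb x) z)"
    unfolding br_SL0 by (rule phi_sc)
  then have "complex_of_real (deg x) * \<phi> (eb x) z
      = (lie (\<phi> (eb (SL 0))) (eb x) z + complex_of_real (g + deg x) * \<phi> (eb x) z) / 2"
    using HDeq[of "SL 0" x z] lie_SL0[OF upiece[of x]] by simp
  then show ?thesis by (simp add: field_simps)
qed

end



context HDer begin

lemma uS3: "g + deg b = real_of_int k \<Longrightarrow> k \<noteq> 0 \<Longrightarrow> {w. \<phi> (eb b) w \<noteq> 0} \<subseteq> {SL k, SM k, SN k}"
  using supp3[OF upiece] by blast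

lemma uS6: "g + deg b = 0 \<Longrightarrow> {w. \<phi> (eb b) w \<noteq> 0} \<subseteq> {SL 0, SM 0, SN 0, CL, CLN, CN}"
  using supp6[OF upiece] by blast

lemma uS1: "g + deg b = real_of_int k + 1/2 \<Longrightarrow> {w. \<phi> (eb b) w \<noteq> 0} \<subseteq> {SY k}"
  using supp1[OF upiece] by blast

end

locale HDerG = HDer +
  fixes G :: int
  assumes gG: "g = real_of_int G" and G0: "G \<noteq> 0"
begin

abbreviation "P \<equiv> \<phi> (eb (SL 0))"

lemma suppP: "{w. P w \<noteq> 0} \<subseteq> {SL G, SM G, SN G}"
  using uS3[of "SL 0" G] gG G0 by simp

lemma KG: "complex_of_real (deg x - g) * \<phi> (eb x) z =
   P (SL G) * br (SL G) x z + P (SM G) * br (SM G) x z + P (SN G) * br (SN G) x z"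
  using K[of x z] lie_right3[OF suppP] by simp

lemma v1: "complex_of_int G * \<phi> (eb (SN 0)) (SM G) = 2 * P (SM G)"
  using KG[of "SN 0" "SM G"] gG by (simp add: sv_def)

lemma v2: "\<phi> (eb (SL (2*G))) (SM (3*G)) = - P (SM G)"
proof -
  have "complex_of_int G * \<phi> (eb (SL (2*G))) (SM (3*G)) = complex_of_int G * (- P (SM G))"
    using KG[of "SL (2*G)" "SM (3*G)"] gG by (simp add: sv_def)
  moreover have "complex_of_int G \<noteq> 0" using G0 by simp
  ultimately show ?thesis by (metis mult_left_cancel)
qed

lemma br_SN0_SL: "m \<noteq> 0 \<Longrightarrow> br (SN 0) (SL m) = (\<lambda>z. 0)"
  by auto

lemma bzero: "P (SM G) = 0"
proof -
  have "0 = (lie (\<phi> (eb (SN 0))) (eb (SL (2*G))) (SM (3*G)) + lie (eb (SN 0)) (\<phi> (eb (SL (2*G)))) (SM (3*G))) / 2"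
  proof -
    have "br (SN 0) (SL (2*G)) = (\<lambda>z. 0)" using G0 by (auto simp: fun_eq_iff)
    then have "\<phi> (br (SN 0) (SL (2*G))) (SM (3*G)) = 0" by (simp only: phi_zero)
    then show ?thesis using HDeq[of "SN 0" "SL (2*G)" "SM (3*G)"] by simp
  qed
  also have "lie (\<phi> (eb (SN 0))) (eb (SL (2*G))) (SM (3*G)) = - complex_of_int G * \<phi> (eb (SN 0)) (SM G)"
    using lie_right3[OF uS3[of "SN 0" G], of "SL (2*G)" "SM (3*G)"] gG G0 by (simp add: sv_def)
  also have "lie (eb (SN 0)) (\<phi> (eb (SL (2*G)))) (SM (3*G)) = 2 * \<phi> (eb (SL (2*G))) (SM (3*G))"
    using lie_left3[OF uS3[of "SL (2*G)" "3*G"], of "SN 0" "SM (3*G)"] gG G0 by (simp add: sv_def)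
  finally show ?thesis using v1 v2 by simp
qed

lemma EM: assumes n0: "n \<noteq> 0" and nG: "n \<noteq> G" and nG0: "n + G \<noteq> 0"
  shows "of_int n * of_int G * P (SL G) + 2 * P (SN G) * of_int G + 2 * P (SN G) * of_int n = 0"
proof -
  define VM where "VM = \<phi> (eb (SM n)) (SM (n+G))"
  define VM0 where "VM0 = \<phi> (eb (SM 0)) (SM G)"
  define VN where "VN = \<phi> (eb (SN n)) (SN (n+G))"
  have k1: "(of_int n - of_int G) * VM = of_int n * P (SL G) + 2 * P (SN G)"
    using KG[of "SM n" "SM (n+G)"] gG nG unfolding VM_def by (simp add: sv_def add.commute)
  have k2: "- of_int G * VM0 = 2 * P (SN G)"
    using KG[of "SM 0" "SM G"] gG unfolding VM0_def by (simp add: sv_def)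
  have k3: "(of_int n - of_int G) * VN = of_int n * P (SL G)"
    using KG[of "SN n" "SN (n+G)"] gG nG nG0 unfolding VN_def by (simp add: sv_def add.commute)
  have "\<phi> (br (SM 0) (SN n)) = (\<lambda>z. (-2) * \<phi> (eb (SM n)) z)"
  proof -
    have "br (SM 0) (SN n) = (\<lambda>z. (-2) * eb (SM n) z)" by (auto simp: sv_def eb_def fun_eq_iff)
    then show ?thesis by (simp only: phi_sc)
  qed
  then have "(-2) * VM = (lie (\<phi> (eb (SM 0))) (eb (SN n)) (SM (n+G)) + lie (eb (SM 0)) (\<phi> (eb (SN n))) (SM (n+G))) / 2"
    using HDeq[of "SM 0" "SN n" "SM (n+G)"] unfolding VM_def by simp
  also have "lie (\<phi> (eb (SM 0))) (eb (SN n)) (SM (n+G)) = -2 * VM0"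
    using lie_right3[OF uS3[of "SM 0" G], of "SN n" "SM (n+G)"] gG G0 unfolding VM0_def by (simp add: sv_def add.commute)
  also have "lie (eb (SM 0)) (\<phi> (eb (SN n))) (SM (n+G)) = -2 * VN"
    using lie_left3[OF uS3[of "SN n" "n+G"], of "SM 0" "SM (n+G)"] gG nG0 unfolding VN_def by (simp add: sv_def)
  finally have "2 * (2 * VM) = 2 * (VM0 + VN)" by (simp add: algebra_simps)
  then have e: "2 * VM = VM0 + VN" by (metis mult_left_cancel zero_neq_numeral)
  show ?thesis using k1 k2 k3 e by algebra
qed

lemma acz: "P (SL G) = 0 \<and> P (SN G) = 0"
proof -
  have e2: "of_int (2*G) * of_int G * P (SL G) + 2 * P (SN G) * of_int G + 2 * P (SN G) * of_int (2*G) = 0"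
    by (rule EM) (use G0 in auto)
  have e3: "of_int (3*G) * of_int G * P (SL G) + 2 * P (SN G) * of_int G + 2 * P (SN G) * of_int (3*G) = 0"
    by (rule EM) (use G0 in auto)
  have g: "(of_int G :: complex) \<noteq> 0" using G0 by simp
  have f2: "of_int G * (2 * of_int G * P (SL G) + 6 * P (SN G)) = 0" using e2 by (simp add: algebra_simps)
  have f3: "of_int G * (3 * of_int G * P (SL G) + 8 * P (SN G)) = 0" using e3 by (simp add: algebra_simps)
  have h2: "2 * of_int G * P (SL G) + 6 * P (SN G) = 0" using f2 g by simp
  have h3: "3 * of_int G * P (SL G) + 8 * P (SN G) = 0" using f3 g by simp
  have c: "P (SN G) = 0" using h2 h3 by algebra
  then have "of_int G * P (SL G) = 0" using h2 by simp
  then show ?thesis using c g by simp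
qed

lemma P0: "P = (\<lambda>z. 0)"
proof
  fix w show "P w = 0" using suppP acz bzero by blast
qed

lemma u_off: "deg x \<noteq> g \<Longrightarrow> \<phi> (eb x) = (\<lambda>z. 0)"
proof
  fix z assume "deg x \<noteq> g"
  then have "complex_of_real (deg x - g) \<noteq> 0" by simp
  moreover have "complex_of_real (deg x - g) * \<phi> (eb x) z = 0"
    using K[of x z] P0 lie_zero_left by simp
  ultimately show "\<phi> (eb x) z = 0" by simp
qed

lemma zero_from_br:
  assumes "deg p \<noteq> g" "deg q \<noteq> g" "br p q = (\<lambda>z. d * eb r z)" "d \<noteq> 0"
  shows "\<phi> (eb r) = (\<lambda>z. 0)"
proof
  fix z
  have "\<phi> (br p q) z = 0" using HDeq[of p q z] u_off[OF assms(1)] u_off[OF assms(2)]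
    by (simp add: lie_zero_left lie_zero_right)
  then have "d * \<phi> (eb r) z = 0" unfolding assms(3) phi_sc .
  then show "\<phi> (eb r) z = 0" using assms(4) by simp
qed

lemma u_all: "\<phi> (eb x) = (\<lambda>z. 0)"
proof (cases "deg x = g")
  case False then show ?thesis by (rule u_off)
next
  case True
  then have "x \<in> {SL G, SM G, SN G}" using deg_int[of x G] gG G0 by auto
  moreover have "\<phi> (eb (SL G)) = (\<lambda>z. 0)"
    by (rule zero_from_br[of "SL (2*G)" "SL (-G)" "of_int (-3*G)"]) (use gG G0 in \<open>auto simp: eb_def fun_eq_iff\<close>)
  moreover have "\<phi> (eb (SM G)) = (\<lambda>z. 0)"
    by (rule zero_from_br[of "SN (2*G)" "SM (-G)" 2]) (use gG G0 in \<open>auto simp: eb_def sv_def fun_eq_iff\<close>)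
  moreover have "\<phi> (eb (SN G)) = (\<lambda>z. 0)"
    by (rule zero_from_br[of "SL (2*G)" "SN (-G)" "of_int (-G)"]) (use gG G0 in \<open>auto simp: eb_def fun_eq_iff\<close>)
  ultimately show ?thesis by auto
qed

end


locale HDer0 = HDer +
  assumes g0: "g = 0"
begin

abbreviation "P \<equiv> \<phi> (eb (SL 0))"

lemma suppP: "{w. P w \<noteq> 0} \<subseteq> {SL 0, SM 0, SN 0, CL, CLN, CN}"
  using uS6[of "SL 0"] g0 by simp

lemma K0: "complex_of_real (deg x) * \<phi> (eb x) z =
   P (SL 0) * br (SL 0) x z + P (SM 0) * br (SM 0) x z + P (SN 0) * br (SN 0) x z"
  using K[of x z] lie_right6[OF suppP] g0 by simp

lemma czero: "P (SN 0) = 0"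
proof -
  define U0 where "U0 = \<phi> (eb (SY 0)) (SY 0)"
  define U1 where "U1 = \<phi> (eb (SY 1)) (SY 1)"
  define U2 where "U2 = \<phi> (eb (SM 2)) (SM 2)"
  have k0: "U0 = P (SL 0) + 2 * P (SN 0)"
    using K0[of "SY 0" "SY 0"] unfolding U0_def by (simp add: sv_def field_simps)
  have k1: "3 * U1 = 3 * P (SL 0) + 2 * P (SN 0)"
    using K0[of "SY 1" "SY 1"] unfolding U1_def by (simp add: sv_def field_simps)
  have k2: "2 * U2 = 2 * P (SL 0) + 2 * P (SN 0)"
    using K0[of "SM 2" "SM 2"] unfolding U2_def by (simp add: sv_def field_simps)
  have "\<phi> (br (SY 0) (SY 1)) = (\<lambda>z. (-1) * \<phi> (eb (SM 2)) z)"
  proof -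
    have "br (SY 0) (SY 1) = (\<lambda>z. (-1) * eb (SM 2) z)" by (auto simp: sv_def eb_def fun_eq_iff)
    then show ?thesis by (simp only: phi_sc)
  qed
  then have "- U2 = (lie (\<phi> (eb (SY 0))) (eb (SY 1)) (SM 2) + lie (eb (SY 0)) (\<phi> (eb (SY 1))) (SM 2)) / 2"
    using HDeq[of "SY 0" "SY 1" "SM 2"] unfolding U2_def by simp
  also have "lie (\<phi> (eb (SY 0))) (eb (SY 1)) (SM 2) = - U0"
    using lie_right1[OF uS1[of "SY 0" 0], of "SY 1" "SM 2"] g0 unfolding U0_def by (simp add: sv_def)
  also have "lie (eb (SY 0)) (\<phi> (eb (SY 1))) (SM 2) = - U1"
    using lie_left1[OF uS1[of "SY 1" 1], of "SY 0" "SM 2"] g0 unfolding U1_def by (simp add: sv_def)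
  finally have e: "2 * U2 = U0 + U1" by (simp add: field_simps)
  show ?thesis using e k0 k1 k2 by algebra
qed

lemma bzero: "P (SM 0) = 0"
proof -
  define V1 where "V1 = \<phi> (eb (SN 3)) (SM 3)"
  define V2 where "V2 = \<phi> (eb (SL 1)) (SM 1)"
  define V3 where "V3 = \<phi> (eb (SN 2)) (SM 2)"
  have k1: "3 * V1 = -2 * P (SM 0)"
    using K0[of "SN 3" "SM 3"] unfolding V1_def by (simp add: sv_def field_simps)
  have k2: "V2 = 0"
    using K0[of "SL 1" "SM 1"] unfolding V2_def by (simp add: sv_def field_simps)
  have k3: "V3 = - P (SM 0)"
    using K0[of "SN 2" "SM 2"] unfolding V3_def by (simp add: sv_def field_simps)
  have "\<phi> (br (SL 1) (SN 2)) = (\<lambda>z. 2 * \<phi> (eb (SN 3)) z)"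
  proof -
    have "br (SL 1) (SN 2) = (\<lambda>z. 2 * eb (SN 3) z)" by (auto simp: sv_def eb_def fun_eq_iff)
    then show ?thesis by (simp only: phi_sc)
  qed
  then have "2 * V1 = (lie (\<phi> (eb (SL 1))) (eb (SN 2)) (SM 3) + lie (eb (SL 1)) (\<phi> (eb (SN 2))) (SM 3)) / 2"
    using HDeq[of "SL 1" "SN 2" "SM 3"] unfolding V1_def by simp
  also have "lie (\<phi> (eb (SL 1))) (eb (SN 2)) (SM 3) = -2 * V2"
    using lie_right3[OF uS3[of "SL 1" 1], of "SN 2" "SM 3"] g0 unfolding V2_def by (simp add: sv_def)
  also have "lie (eb (SL 1)) (\<phi> (eb (SN 2))) (SM 3) = 2 * V3"
    using lie_left3[OF uS3[of "SN 2" 2], of "SL 1" "SM 3"] g0 unfolding V3_def by (simp add: sv_def)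
  finally have e: "2 * V1 = (-2 * V2 + 2 * V3) / 2" .
  then have e': "2 * V1 = - P (SM 0)" using k2 k3 by simp
  show ?thesis using e' k1 by algebra
qed

abbreviation "a \<equiv> P (SL 0)"

lemma u_nz: "deg x \<noteq> 0 \<Longrightarrow> \<phi> (eb x) = (\<lambda>z. a * eb x z)"
proof
  fix z assume d: "deg x \<noteq> 0"
  have "complex_of_real (deg x) * \<phi> (eb x) z = complex_of_real (deg x) * (a * eb x z)"
    using K0[of x z] czero bzero by (simp add: br_SL0)
  then show "\<phi> (eb x) z = a * eb x z" using d by simp
qed

lemma from_br: assumes "\<phi> (eb p) = (\<lambda>z. a * eb p z)" "\<phi> (eb q) = (\<lambda>z. a * eb q z)"
  shows "\<phi> (br p q) z = a * br p q z"
proof -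
  have s: "{w. a * eb p w \<noteq> 0} \<subseteq> {p}" "{w. a * eb q w \<noteq> 0} \<subseteq> {q}" by (auto simp: eb_def)
  have "lie (\<lambda>z. a * eb p z) (eb q) z = a * br p q z"
    using lie_right[OF _ s(1), of q z] by (simp add: eb_def)
  moreover have "lie (eb p) (\<lambda>z. a * eb q z) z = a * br p q z"
    using lie_left[OF _ s(2), of p z] by (simp add: eb_def)
  ultimately show ?thesis using HDeq[of p q z] assms by simp
qed

lemma new2: assumes "\<phi> (eb p) = (\<lambda>z. a * eb p z)" "\<phi> (eb q) = (\<lambda>z. a * eb q z)"
  "\<phi> (eb rA) = (\<lambda>z. a * eb rA z)"
  "br p q = (\<lambda>z. dA * eb rA z + dB * eb rB z)" "dB \<noteq> 0"
  shows "\<phi> (eb rB) = (\<lambda>z. a * eb rB z)"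
proof
  fix z
  have "\<phi> (br p q) z = a * br p q z" by (rule from_br[OF assms(1,2)])
  then have "dA * (a * eb rA z) + dB * \<phi> (eb rB) z = a * (dA * eb rA z + dB * eb rB z)"
    unfolding assms(4) phi_comb using assms(3) by simp
  then have "dB * \<phi> (eb rB) z = dB * (a * eb rB z)" by (simp add: algebra_simps)
  then show "\<phi> (eb rB) z = a * eb rB z" using assms(5) by simp
qed

lemma new1: assumes "\<phi> (eb p) = (\<lambda>z. a * eb p z)" "\<phi> (eb q) = (\<lambda>z. a * eb q z)"
  "br p q = (\<lambda>z. dB * eb rB z)" "dB \<noteq> 0"
  shows "\<phi> (eb rB) = (\<lambda>z. a * eb rB z)"
  by (rule new2[OF assms(1,2) assms(1), of 0]) (use assms(3,4) in auto)

lemma u_all: "\<phi> (eb x) = (\<lambda>z. a * eb x z)"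
proof (cases "deg x = 0")
  case False then show ?thesis by (rule u_nz)
next
  case True
  then have "x \<in> {SL 0, SM 0, SN 0, CL, CLN, CN}" using deg_int[of x 0] by auto
  have sl0: "\<phi> (eb (SL 0)) = (\<lambda>z. a * eb (SL 0) z)"
    apply (rule new1[where p="SL (-1)" and q="SL 1" and dB=2])
    apply (rule u_nz, simp)+
    by (auto simp: eb_def fun_eq_iff)
  have sm0: "\<phi> (eb (SM 0)) = (\<lambda>z. a * eb (SM 0) z)"
    apply (rule new1[where p="SL (-1)" and q="SM 1" and dB=1])
    apply (rule u_nz, simp)+
    by (auto simp: eb_def sv_def fun_eq_iff)
  have sn0: "\<phi> (eb (SN 0)) = (\<lambda>z. a * eb (SN 0) z)"
    apply (rule new1[where p="SL 1" and q="SN (-1)" and dB="-1"])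
    apply (rule u_nz, simp)+
    by (auto simp: eb_def fun_eq_iff)
  have cn: "\<phi> (eb CN) = (\<lambda>z. a * eb CN z)"
    apply (rule new1[where p="SN 1" and q="SN (-1)" and dB="-1"])
    apply (rule u_nz, simp)+
    by (auto simp: eb_def sv_def fun_eq_iff)
  have cln: "\<phi> (eb CLN) = (\<lambda>z. a * eb CLN z)"
    apply (rule new2[where p="SL 2" and q="SN (-2)" and rA="SN 0" and dA="-2" and dB=2])
    apply (rule u_nz, simp)
    apply (rule u_nz, simp)
    apply (rule sn0)
    by (auto simp: eb_def fun_eq_iff)
  have cl: "\<phi> (eb CL) = (\<lambda>z. a * eb CL z)"
    apply (rule new2[where p="SL 2" and q="SL (-2)" and rA="SL 0" and dA="-4" and dB="1/2"])
    apply (rule u_nz, simp)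
    apply (rule u_nz, simp)
    apply (rule sl0)
    by (auto simp: eb_def fun_eq_iff)
  show ?thesis using \<open>x \<in> _\<close> sl0 sm0 sn0 cn cln cl by auto
qed

end


lemma lie_scl: "lie (\<lambda>z. c * x z) y = (\<lambda>z. c * lie x y z)"
proof (cases "c = 0")
  case True then show ?thesis by (simp add: lie_def)
next
  case False
  then have "{a. c * x a \<noteq> 0} = {a. x a \<noteq> 0}" by auto
  then show ?thesis unfolding lie_def by (simp add: sum_distrib_left mult.assoc)
qed

lemma lie_scr: "lie x (\<lambda>z. c * y z) = (\<lambda>z. c * lie x y z)"
proof (cases "c = 0")
  case True then show ?thesis by (simp add: lie_def)
next
  case False
  then have "{a. c * y a \<noteq> 0} = {a. y a \<noteq> 0}" by auto
  then show ?thesis unfolding lie_def by (simp add: sum_distrib_left algebra_simps)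
qed

lemma scV': "x \<in> soV \<Longrightarrow> (\<lambda>z. d * x z) \<in> soV"
  unfolding soV_def by (auto elim: finite_subset[rotated])

lemma scalar_in: "(\<lambda>x z. c * x z) \<in> Delta 0"
proof -
  have lin: "linear_map_so (\<lambda>x z. c * x z)"
    unfolding linear_map_so_def using scV' by (auto simp: algebra_simps)
  have hd: "half_derivation (\<lambda>x z. c * x z)"
    unfolding half_derivation_def using lin by (simp add: lie_scl lie_scr)
  have dg: "has_degree (\<lambda>x z. c * x z) 0"
    unfolding has_degree_def piece_def using scV' by auto
  show ?thesis unfolding Delta_def using hd dg by simp
qed

theorem mainTheorem1:
  shows "(\<forall>\<phi>\<in>Delta 0. \<exists>c::complex. \<forall>x\<in>soV. \<phi> x = (\<lambda>z. c * x z))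
       \<and> (\<forall>c::complex. (\<lambda>x z. c * x z) \<in> Delta 0)
       \<and> (\<forall>j::real. j \<in> \<int> \<and> j \<noteq> 0 \<longrightarrow> (\<forall>\<phi>\<in>Delta j. \<forall>x\<in>soV. \<phi> x = (\<lambda>z. 0)))"
proof (intro conjI allI ballI impI)
  fix \<phi> assume "\<phi> \<in> Delta 0"
  then interpret HDer0 \<phi> 0
    by unfold_locales (auto simp: Delta_def)
  show "\<exists>c::complex. \<forall>x\<in>soV. \<phi> x = (\<lambda>z. c * x z)"
    using final_lemma[OF lin u_all] by blast
next
  fix c :: complex show "(\<lambda>x z. c * x z) \<in> Delta 0" by (rule scalar_in)
next
  fix j :: real and \<phi> x assume j: "j \<in> \<int> \<and> j \<noteq> 0" and p: "\<phi> \<in> Delta j" and x: "x \<in> soV"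
  from j obtain G where G: "j = real_of_int G" by (auto elim: Ints_cases)
  with j have "G \<noteq> 0" by auto
  interpret HDerG \<phi> j G
    by unfold_locales (use p G \<open>G \<noteq> 0\<close> in \<open>auto simp: Delta_def\<close>)
  have "\<phi> x = (\<lambda>z. 0 * x z)"
    by (rule final_lemma[OF lin _ x]) (simp add: u_all)
  then show "\<phi> x = (\<lambda>z. 0)" by simp
qed

end
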